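(* Let $A, B\in\mathbb{R}^{m\times n}$ with $m<n$, $b\in\mathbb{R}^m$, and $s\in\{-1,1\}^n$, and let $B = M_B - N_B$ with $M_B,N_B\in\mathbb{R}^{m\times n}$ and $\operatorname{rank}(M_B) = m$. (a) Let $1\le p\le\infty$. If $M_B^\dagger b \le 0$, $M_B^\dagger [N_B+A\operatorname{diag}(s)] \ge 0$ and $\|M_B^\dagger [N_B+A\operatorname{diag}(s)]\|_p < 1$, then there exists a nonnegative solution $y_*\in\mathbb{R}^n$ of the linear system $[A\operatorname{diag}(s)-B]y=b$ such that $x_* = \operatorname{diag}(s)y_*$ is a solution of $Ax-B|x|=b$. (b) If $M_B^\dagger b < 0$ and $\|M_B^\dagger [N_B+A\operatorname{diag}(s)]\|_\infty < \gamma/2$, where $\gamma = \dfrac{\min_i|(M_B^\dagger b)_i|}{\max_i|(M_B^\dagger b)_i|}$, then $Ax-B|x|=b$ has infinitely many solutions with the sign pattern $s$.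
   Context: $M^\dagger$ is the Moore–Penrose inverse; $|x|$ is the entrywise absolute value; $\operatorname{diag}(s)$ is the diagonal matrix with diagonal $s$. Vector/matrix inequalities ($\le,<,\ge$) are entrywise. $\|\cdot\|_p$ on matrices is the operator norm induced by the vector $p$-norm. A vector $x$ has sign pattern $s$ if $\operatorname{sign}(x_{(i)})=s_{(i)}$ for all $i$. *)

theory Defs
  imports "HOL-Analysis.Analysis" "HOL-Library.Extended_Real"
begin

definition mp_inverse :: "real^'n^'m \<Rightarrow> real^'m^'n" where
  "mp_inverse M = (THE X. M ** X ** M = M \<and> X ** M ** X = X \<and>
       transpose (M ** X) = M ** X \<and> transpose (X ** M) = X ** M)"

definition vabs :: "real^'n \<Rightarrow> real^'n" where
  "vabs x = (\<chi> i. \<bar>x $ i\<bar>)"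

definition diagm :: "real^'n \<Rightarrow> real^'n^'n" where
  "diagm s = (\<chi> i j. if i = j then s $ i else 0)"

definition vpnorm :: "ereal \<Rightarrow> real^'n \<Rightarrow> real" where
  "vpnorm p x = (if p = \<infinity> then Max (range (\<lambda>i. \<bar>x $ i\<bar>))
                 else (\<Sum>i\<in>UNIV. \<bar>x $ i\<bar> powr real_of_ereal p) powr (1 / real_of_ereal p))"

definition opnorm :: "ereal \<Rightarrow> real^'n^'m \<Rightarrow> real" where
  "opnorm p M = Sup {vpnorm p (M *v x) / vpnorm p x | x. x \<noteq> 0}"

end

theory Submission imports Defs begin
lemma mp_unique:
  fixes M :: "real^'n^'m" and X Y :: "real^'m^'n"
  assumes X: "M ** X ** M = M" "X ** M ** X = X" "transpose (M ** X) = M ** X" "transpose (X ** M) = X ** M"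
  and Y: "M ** Y ** M = M" "Y ** M ** Y = Y" "transpose (M ** Y) = M ** Y" "transpose (Y ** M) = Y ** M"
  shows "X = Y"
proof -
  have "X = X ** (M ** X)" using X(2) by (simp add: matrix_mul_assoc)
  also have "\<dots> = X ** transpose (M ** X)" using X(3) by simp
  also have "\<dots> = X ** transpose X ** transpose M" by (simp add: matrix_transpose_mul matrix_mul_assoc)
  also have "\<dots> = X ** transpose X ** transpose (M ** Y ** M)" using Y(1) by simp
  also have "\<dots> = X ** transpose (M ** X) ** transpose (M ** Y)" by (simp add: matrix_transpose_mul matrix_mul_assoc)
  also have "\<dots> = X ** (M ** X) ** (M ** Y)" using X(3) Y(3) by simp
  also have "\<dots> = X ** M ** Y" using X(2) by (simp add: matrix_mul_assoc)
  finally have 1: "X = X ** M ** Y" .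
  have "Y = (Y ** M) ** Y" using Y(2) by (simp add: matrix_mul_assoc)
  also have "\<dots> = transpose (Y ** M) ** Y" using Y(4) by simp
  also have "\<dots> = transpose M ** transpose Y ** Y" by (simp add: matrix_transpose_mul matrix_mul_assoc)
  also have "\<dots> = transpose (M ** X ** M) ** transpose Y ** Y" using X(1) by simp
  also have "\<dots> = transpose (X ** M) ** transpose (Y ** M) ** Y" by (simp add: matrix_transpose_mul matrix_mul_assoc)
  also have "\<dots> = (X ** M) ** (Y ** M) ** Y" using X(4) Y(4) by simp
  also have "\<dots> = X ** M ** Y" using Y(2) by (metis matrix_mul_assoc)
  finally show ?thesis using 1 by simp
qed

lemma mp_right_inv:
  fixes M :: "real^'n^'m"
  assumes r: "rank M = CARD('m)"
  shows "M ** mp_inverse M = mat 1"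
proof -
  let ?G = "M ** transpose M"
  have injT: "inj ((*v) (transpose M))"
    using r full_rank_injective[of "transpose M"] rank_transpose[of M] by simp
  have "inj ((*v) ?G)"
  proof (rule linear_injective_0[THEN iffD2])
    show "linear ((*v) ?G)" by (rule matrix_vector_mul_linear)
    show "\<forall>x. ?G *v x = 0 \<longrightarrow> x = 0"
    proof (intro allI impI)
      fix x assume "?G *v x = 0"
      hence "inner x (?G *v x) = 0" by simp
      moreover have "inner x (?G *v x) = inner (transpose M *v x) (transpose M *v x)"
        by (metis dot_lmul_matrix matrix_vector_mul_assoc transpose_matrix_vector)
      ultimately have "transpose M *v x = 0" by simp
      thus "x = 0" using injT by (metis inj_eq matrix_vector_mult_0_right)
    qed
  qed
  hence "surj ((*v) ?G)" using full_rank_injective[of ?G] full_rank_surjective[of ?G] by simp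
  then obtain Gi where GGi: "?G ** Gi = mat 1"
    using matrix_right_invertible_surjective by blast
  hence GiG: "Gi ** ?G = mat 1" by (simp add: matrix_left_right_inverse)
  have "transpose Gi ** ?G = mat 1"
    by (metis GGi matrix_transpose_mul transpose_mat transpose_transpose matrix_mul_assoc)
  hence sym: "transpose Gi = Gi"
    by (metis GGi matrix_mul_assoc matrix_mul_lid matrix_mul_rid)
  define X where "X = transpose M ** Gi"
  have MX: "M ** X = mat 1" using GGi by (simp add: X_def matrix_mul_assoc)
  have P: "M ** X ** M = M \<and> X ** M ** X = X \<and> transpose (M ** X) = M ** X \<and> transpose (X ** M) = X ** M"
    using MX sym by (simp add: X_def matrix_mul_assoc[symmetric] matrix_transpose_mul)
  have "mp_inverse M = X"
    unfolding mp_inverse_def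
    apply (rule the_equality)
     apply (rule P)
    using P mp_unique by blast
  thus ?thesis using MX by simp
qed

definition maxabs :: "real^'n \<Rightarrow> real" where
  "maxabs x = Max (range (\<lambda>i. \<bar>x $ i\<bar>))"

lemma maxabs_ge: "\<bar>x $ i\<bar> \<le> maxabs x"
  unfolding maxabs_def by (rule Max_ge) auto

lemma maxabs_attained: "\<exists>i. maxabs x = \<bar>x $ i\<bar>"
proof -
  have "Max (range (\<lambda>i. \<bar>x $ i\<bar>)) \<in> range (\<lambda>i. \<bar>x $ i\<bar>)"
    by (rule Max_in) auto
  then obtain i where "Max (range (\<lambda>i. \<bar>x $ i\<bar>)) = \<bar>x $ i\<bar>" by blast
  thus ?thesis unfolding maxabs_def by blast
qed

lemma maxabs_nonneg: "0 \<le> maxabs x"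
  using maxabs_ge[of x] abs_ge_zero order_trans by blast

lemma ereal_fin:
  assumes "1 \<le> p" "p \<noteq> \<infinity>"
  shows "p = ereal (real_of_ereal p) \<and> 1 \<le> real_of_ereal p"
  using assms by (cases p) auto

lemma vp_lower:
  assumes "1 \<le> p"
  shows "\<bar>x $ i\<bar> \<le> vpnorm p x"
proof (cases "p = \<infinity>")
  case True
  thus ?thesis using maxabs_ge[of x i] by (simp add: vpnorm_def maxabs_def)
next
  case False
  define r where "r = real_of_ereal p"
  have r: "1 \<le> r" using ereal_fin[OF assms False] r_def by simp
  have "\<bar>x $ i\<bar> = (\<bar>x $ i\<bar> powr r) powr (1 / r)"
    using r by (simp add: powr_powr)
  also have "\<dots> \<le> (\<Sum>j\<in>UNIV. \<bar>x $ j\<bar> powr r) powr (1 / r)"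
    by (rule powr_mono2) (use r in \<open>auto intro: member_le_sum\<close>)
  finally show ?thesis using False by (simp add: vpnorm_def r_def)
qed

lemma vp_pos:
  assumes "1 \<le> p" "x \<noteq> 0"
  shows "0 < vpnorm p x"
proof -
  obtain i where "x $ i \<noteq> 0" using assms(2) by (metis vec_eq_iff zero_index)
  thus ?thesis using vp_lower[OF assms(1), of x i] by simp
qed

lemma vp_upper:
  assumes "1 \<le> p"
  shows "vpnorm p (x::real^'n) \<le> real CARD('n) * maxabs x"
proof (cases "p = \<infinity>")
  case True
  have "maxabs x \<le> real CARD('n) * maxabs x"
    using maxabs_nonneg[of x] by (simp add: mult_le_cancel_right1)
  thus ?thesis using True by (simp add: vpnorm_def maxabs_def)
next
  case False
  define r where "r = real_of_ereal p"
  have r: "1 \<le> r" using ereal_fin[OF assms False] r_def by simp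
  define M where "M = maxabs x"
  have M0: "0 \<le> M" using maxabs_nonneg M_def by simp
  have "(\<Sum>j\<in>UNIV. \<bar>x $ j\<bar> powr r) \<le> (\<Sum>j\<in>(UNIV::'n set). M powr r)"
    by (rule sum_mono, rule powr_mono2) (use r maxabs_ge M_def in auto)
  also have "\<dots> = real CARD('n) * M powr r" by simp
  finally have "(\<Sum>j\<in>UNIV. \<bar>x $ j\<bar> powr r) powr (1/r) \<le> (real CARD('n) * M powr r) powr (1/r)"
    by (rule powr_mono2[rotated 2]) (use r in \<open>auto intro: sum_nonneg\<close>)
  also have "\<dots> = real CARD('n) powr (1/r) * M"
    using r M0 by (simp add: powr_mult powr_powr)
  also have "\<dots> \<le> real CARD('n) * M"
  proof (rule mult_right_mono[OF _ M0])
    have "real CARD('n) powr (1/r) \<le> real CARD('n) powr 1"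
      by (rule powr_mono) (use r in auto)
    thus "real CARD('n) powr (1/r) \<le> real CARD('n)" by simp
  qed
  finally show ?thesis using False by (simp add: vpnorm_def r_def M_def)
qed

lemma vp_mono:
  assumes "1 \<le> p" "\<forall>i. 0 \<le> u $ i \<and> u $ i \<le> v $ i"
  shows "vpnorm p u \<le> vpnorm p v"
proof (cases "p = \<infinity>")
  case True
  have "Max (range (\<lambda>i. \<bar>u $ i\<bar>)) \<le> Max (range (\<lambda>i. \<bar>v $ i\<bar>))"
  proof (subst Max_le_iff, simp, simp, intro ballI)
    fix a assume "a \<in> range (\<lambda>i. \<bar>u $ i\<bar>)"
    then obtain i where "a = \<bar>u $ i\<bar>" by auto
    hence "a \<le> \<bar>v $ i\<bar>" using assms(2) by (metis abs_of_nonneg order_trans)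
    also have "\<dots> \<le> Max (range (\<lambda>i. \<bar>v $ i\<bar>))" by (rule Max_ge) auto
    finally show "a \<le> Max (range (\<lambda>i. \<bar>v $ i\<bar>))" .
  qed
  thus ?thesis using True by (simp add: vpnorm_def)
next
  case False
  define r where "r = real_of_ereal p"
  have r: "1 \<le> r" using ereal_fin[OF assms(1) False] r_def by simp
  have uv: "\<bar>u $ j\<bar> \<le> \<bar>v $ j\<bar>" for j using assms(2) by (metis abs_of_nonneg order_trans)
  have "(\<Sum>j\<in>UNIV. \<bar>u $ j\<bar> powr r) \<le> (\<Sum>j\<in>UNIV. \<bar>v $ j\<bar> powr r)"
    by (rule sum_mono, rule powr_mono2) (use r uv in auto)
  hence "(\<Sum>j\<in>UNIV. \<bar>u $ j\<bar> powr r) powr (1/r) \<le> (\<Sum>j\<in>UNIV. \<bar>v $ j\<bar> powr r) powr (1/r)"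
    by (rule powr_mono2[rotated 2]) (use r in \<open>auto intro: sum_nonneg\<close>)
  thus ?thesis using False by (simp add: vpnorm_def r_def)
qed

lemma maxabs_mul:
  fixes M :: "real^'n^'m"
  shows "maxabs (M *v x) \<le> (\<Sum>i\<in>UNIV. \<Sum>j\<in>UNIV. \<bar>M $ i $ j\<bar>) * maxabs x"
proof -
  obtain i where i: "maxabs (M *v x) = \<bar>(M *v x) $ i\<bar>" using maxabs_attained by blast
  have "\<bar>(M *v x) $ i\<bar> = \<bar>\<Sum>j\<in>UNIV. M $ i $ j * x $ j\<bar>" by (simp add: matrix_vector_mult_def)
  also have "\<dots> \<le> (\<Sum>j\<in>UNIV. \<bar>M $ i $ j * x $ j\<bar>)" by (rule sum_abs)
  also have "\<dots> \<le> (\<Sum>j\<in>UNIV. \<bar>M $ i $ j\<bar> * maxabs x)"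
    by (rule sum_mono) (simp add: abs_mult maxabs_ge mult_left_mono)
  also have "\<dots> = (\<Sum>j\<in>UNIV. \<bar>M $ i $ j\<bar>) * maxabs x" by (simp add: sum_distrib_right)
  also have "\<dots> \<le> (\<Sum>i\<in>UNIV. \<Sum>j\<in>UNIV. \<bar>M $ i $ j\<bar>) * maxabs x"
    by (rule mult_right_mono[OF _ maxabs_nonneg], rule member_le_sum) (auto intro: sum_nonneg)
  finally show ?thesis using i by simp
qed

lemma op_bound:
  fixes M :: "real^'n^'m"
  assumes p: "1 \<le> p" and x: "x \<noteq> 0"
  shows "vpnorm p (M *v x) \<le> opnorm p M * vpnorm p x"
proof -
  define K where "K = (\<Sum>i\<in>UNIV. \<Sum>j\<in>UNIV. \<bar>M $ i $ j\<bar>)"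
  have K0: "0 \<le> K" unfolding K_def by (auto intro: sum_nonneg)
  have bd: "vpnorm p (M *v y) / vpnorm p y \<le> real CARD('m) * K" if y: "y \<noteq> 0" for y
  proof -
    have pos: "0 < vpnorm p y" using vp_pos[OF p y] .
    obtain i where i: "maxabs y = \<bar>y $ i\<bar>" using maxabs_attained by blast
    have my: "maxabs y \<le> vpnorm p y" using vp_lower[OF p, of y i] i by simp
    have "vpnorm p (M *v y) \<le> real CARD('m) * maxabs (M *v y)" by (rule vp_upper[OF p])
    also have "\<dots> \<le> real CARD('m) * (K * maxabs y)"
      using maxabs_mul[of M y] K_def by (simp add: mult_left_mono)
    also have "\<dots> \<le> real CARD('m) * K * vpnorm p y"
      using my K0 by (simp add: mult_left_mono mult.assoc)
    finally show ?thesis using pos by (simp add: pos_divide_le_eq)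
  qed
  have "vpnorm p (M *v x) / vpnorm p x \<le> opnorm p M"
    unfolding opnorm_def
    by (rule cSup_upper) (use x bd in \<open>auto simp: bdd_above_def\<close>)
  thus ?thesis using vp_pos[OF p x] by (simp add: pos_divide_le_eq)
qed

lemma diag_apply: "(diagm s *v y) $ i = s $ i * y $ i"
  by (simp add: matrix_vector_mult_def diagm_def if_distrib[of "\<lambda>a. a * _"] cong: if_cong)

lemma vp_inf: "vpnorm \<infinity> x = maxabs x"
  by (simp add: vpnorm_def maxabs_def)

lemma fixpt:
  fixes C :: "real^'n^'n"
  assumes p: "1 \<le> p" and q: "opnorm p C < 1"
  shows "\<exists>y. y = C *v y + d"
proof -
  let ?L = "mat 1 - C"
  have "inj ((*v) ?L)"
  proof (rule linear_injective_0[THEN iffD2])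
    show "linear ((*v) ?L)" by (rule matrix_vector_mul_linear)
    show "\<forall>x. ?L *v x = 0 \<longrightarrow> x = 0"
    proof (intro allI impI, rule ccontr)
      fix x assume "?L *v x = 0" "x \<noteq> 0"
      hence e: "C *v x = x" by (simp add: matrix_vector_mult_diff_rdistrib)
      have pos: "0 < vpnorm p x" using vp_pos[OF p \<open>x \<noteq> 0\<close>] .
      have "vpnorm p (C *v x) \<le> opnorm p C * vpnorm p x" by (rule op_bound[OF p \<open>x \<noteq> 0\<close>])
      hence "vpnorm p x \<le> opnorm p C * vpnorm p x" using e by simp
      thus False using pos q by (simp add: mult_le_cancel_right1)
    qed
  qed
  hence "surj ((*v) ?L)" using full_rank_injective[of ?L] full_rank_surjective[of ?L] by simp
  then obtain y where "?L *v y = d" by (metis surjD)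
  hence "y - C *v y = d" by (simp add: matrix_vector_mult_diff_rdistrib)
  hence "y = C *v y + d" by (metis diff_add_cancel add.commute)
  thus ?thesis by blast
qed

lemma fix_nonneg:
  fixes C :: "real^'n^'n"
  assumes p: "1 \<le> p" and q: "opnorm p C < 1" and C0: "\<forall>i j. 0 \<le> C $ i $ j"
    and d0: "\<forall>i. 0 \<le> d $ i" and y: "y = C *v y + d"
  shows "\<forall>i. 0 \<le> y $ i"
proof (rule ccontr)
  assume "\<not> (\<forall>i. 0 \<le> y $ i)"
  define u where "u = (\<chi> i. max (- y $ i) 0)"
  have u0: "\<forall>i. 0 \<le> u $ i" by (simp add: u_def)
  obtain i0 where "y $ i0 < 0" using \<open>\<not> (\<forall>i. 0 \<le> y $ i)\<close> not_le by blast
  hence "u $ i0 \<noteq> 0" by (simp add: u_def)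
  hence "u \<noteq> 0" by auto
  have Cu0: "0 \<le> (C *v u) $ i" for i
    using C0 u0 by (simp add: matrix_vector_mult_def sum_nonneg)
  have "- (C *v u) $ i \<le> (C *v y) $ i" for i
  proof -
    have "(\<Sum>j\<in>UNIV. C $ i $ j * (- u $ j)) \<le> (\<Sum>j\<in>UNIV. C $ i $ j * y $ j)"
      by (rule sum_mono, rule mult_left_mono) (use C0 in \<open>auto simp: u_def\<close>)
    thus ?thesis by (simp add: matrix_vector_mult_def sum_negf)
  qed
  hence le: "u $ i \<le> (C *v u) $ i" for i
  proof -
    have "y $ i = (C *v y) $ i + d $ i" using y by (metis vector_add_component)
    hence "- y $ i \<le> (C *v u) $ i" using \<open>- (C *v u) $ i \<le> (C *v y) $ i\<close> d0 by (metis add_increasing2 neg_le_iff_le minus_minus)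
    thus ?thesis using Cu0[of i] by (simp add: u_def)
  qed
  have "vpnorm p u \<le> vpnorm p (C *v u)" by (rule vp_mono[OF p]) (use u0 le in auto)
  also have "\<dots> \<le> opnorm p C * vpnorm p u" by (rule op_bound[OF p \<open>u \<noteq> 0\<close>])
  finally show False using vp_pos[OF p \<open>u \<noteq> 0\<close>] q by (simp add: mult_le_cancel_right1)
qed

lemma solves:
  fixes A B MB NB :: "real^'n^'m" and b :: "real^'m" and s :: "real^'n"
  assumes MBi: "MB ** mp_inverse MB = mat 1" and B: "B = MB - NB"
    and y: "y = (mp_inverse MB ** (NB + A ** diagm s)) *v y + (- (mp_inverse MB *v b))"
  shows "(A ** diagm s - B) *v y = b"
proof -
  have "MB *v y = (MB ** (mp_inverse MB ** (NB + A ** diagm s))) *v y - (MB ** mp_inverse MB) *v b"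
    by (subst y) (simp add: matrix_vector_mul_assoc[symmetric]
        matrix_vector_right_distrib matrix_vector_mult_diff_distrib)
  also have "\<dots> = (NB + A ** diagm s) *v y - b"
    using MBi by (simp add: matrix_mul_assoc)
  finally have "MB *v y = (NB + A ** diagm s) *v y - b" .
  thus ?thesis using B
    by (simp add: matrix_vector_mult_diff_rdistrib matrix_vector_mult_add_rdistrib)
qed

lemma vabs_diag:
  assumes s: "\<forall>i. s $ i = 1 \<or> s $ i = -1" and y: "\<forall>i. 0 \<le> y $ i"
  shows "vabs (diagm s *v y) = y"
  unfolding vabs_def vec_eq_iff using s y by (auto simp: diag_apply abs_mult) (metis abs_of_nonneg abs_one abs_minus_cancel mult_1)

theorem theorem3p5:
  fixes A B MB NB :: "real^'n^'m" and b :: "real^'m" and s :: "real^'n"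
  assumes "CARD('m) < CARD('n)"
    and "\<forall>i. s $ i = 1 \<or> s $ i = -1"
    and "B = MB - NB"
    and "rank MB = CARD('m)"
  shows "(\<forall>p::ereal. 1 \<le> p \<longrightarrow>
            (\<forall>i. (mp_inverse MB *v b) $ i \<le> 0) \<longrightarrow>
            (\<forall>i j. (mp_inverse MB ** (NB + A ** diagm s)) $ i $ j \<ge> 0) \<longrightarrow>
            opnorm p (mp_inverse MB ** (NB + A ** diagm s)) < 1 \<longrightarrow>
            (\<exists>y. (\<forall>i. y $ i \<ge> 0) \<and> (A ** diagm s - B) *v y = b \<and>
                 A *v (diagm s *v y) - B *v vabs (diagm s *v y) = b))
       \<and> ((\<forall>i. (mp_inverse MB *v b) $ i < 0) \<and>
           opnorm \<infinity> (mp_inverse MB ** (NB + A ** diagm s)) <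
             (Min (range (\<lambda>i. \<bar>(mp_inverse MB *v b) $ i\<bar>)) /
              Max (range (\<lambda>i. \<bar>(mp_inverse MB *v b) $ i\<bar>))) / 2
           \<longrightarrow> infinite {x. A *v x - B *v vabs x = b \<and> (\<forall>i. sgn (x $ i) = s $ i)})"
proof -
  note s = assms(2) and Bdef = assms(3)
  have MBi: "MB ** mp_inverse MB = mat 1" by (rule mp_right_inv[OF assms(4)])
  define C where "C = mp_inverse MB ** (NB + A ** diagm s)"
  define c where "c = mp_inverse MB *v b"
  define K where "K = A ** diagm s - B"
  have sol: "K *v y = b" if "y = C *v y + (- c)" for y
    unfolding K_def by (rule solves[OF MBi Bdef]) (use that in \<open>simp add: C_def c_def\<close>)
  have Kx: "A *v (diagm s *v y) - B *v vabs (diagm s *v y) = K *v y" if "\<forall>i. 0 \<le> y $ i" for y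
    using vabs_diag[OF s that] by (simp add: K_def matrix_vector_mul_assoc matrix_vector_mult_diff_rdistrib)
  have partA: ?thesis if False using that by simp
  show ?thesis
  proof (intro conjI allI impI)
    fix p :: ereal
    assume p: "1 \<le> p" and c0: "\<forall>i. (mp_inverse MB *v b) $ i \<le> 0"
      and C0: "\<forall>i j. (mp_inverse MB ** (NB + A ** diagm s)) $ i $ j \<ge> 0"
      and q: "opnorm p (mp_inverse MB ** (NB + A ** diagm s)) < 1"
    obtain y where y: "y = C *v y + (- c)" using fixpt[OF p q[folded C_def]] by blast
    have y0: "\<forall>i. 0 \<le> y $ i"
      by (rule fix_nonneg[OF p q[folded C_def] C0[folded C_def] _ y]) (use c0 in \<open>simp add: c_def\<close>)
    show "\<exists>y. (\<forall>i. y $ i \<ge> 0) \<and> (A ** diagm s - B) *v y = b \<and>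
                 A *v (diagm s *v y) - B *v vabs (diagm s *v y) = b"
      using y0 sol[OF y] Kx[OF y0] K_def by auto
  next
    assume H: "(\<forall>i. (mp_inverse MB *v b) $ i < 0) \<and>
           opnorm \<infinity> (mp_inverse MB ** (NB + A ** diagm s)) <
             (Min (range (\<lambda>i. \<bar>(mp_inverse MB *v b) $ i\<bar>)) /
              Max (range (\<lambda>i. \<bar>(mp_inverse MB *v b) $ i\<bar>))) / 2"
    define cmin where "cmin = Min (range (\<lambda>i. \<bar>c $ i\<bar>))"
    define q where "q = opnorm \<infinity> C"
    have cneg: "\<forall>i. c $ i < 0" using H by (simp add: c_def)
    have qlt: "q < cmin / maxabs c / 2" using H by (simp add: q_def C_def cmin_def c_def maxabs_def)
    obtain k0 where k0: "cmin = \<bar>c $ k0\<bar>"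
    proof -
      have "cmin \<in> range (\<lambda>i. \<bar>c $ i\<bar>)" unfolding cmin_def by (rule Min_in) auto
      thus ?thesis using that by blast
    qed
    have cminle: "cmin \<le> \<bar>c $ i\<bar>" for i unfolding cmin_def by (rule Min_le) auto
    have cmin0: "0 < cmin" using k0 cneg[rule_format, of k0] by simp
    have cminmax: "cmin \<le> maxabs c" using k0 maxabs_ge by metis
    have cmax0: "0 < maxabs c" using cmin0 cminmax by linarith
    have "cmin / maxabs c \<le> 1" using cminmax cmax0 by simp
    hence "cmin / maxabs c / 2 \<le> 1/2" by (simp add: divide_right_mono)
    hence qhalf: "q < 1/2" using qlt by linarith
    have pinf: "(1::ereal) \<le> \<infinity>" by simp
    obtain y where y: "y = C *v y + (- c)" using fixpt[OF pinf, of C "- c"] qhalf q_def by force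
    have "y \<noteq> 0"
    proof
      assume "y = 0"
      hence "c = 0" using y by simp
      thus False using cneg by simp
    qed
    define M where "M = maxabs y"
    have Cy: "\<bar>(C *v y) $ i\<bar> \<le> q * M" for i
    proof -
      have "\<bar>(C *v y) $ i\<bar> \<le> vpnorm \<infinity> (C *v y)" by (simp add: vp_inf maxabs_ge)
      also have "\<dots> \<le> q * M" using op_bound[OF pinf \<open>y \<noteq> 0\<close>, of C] by (simp add: q_def M_def vp_inf)
      finally show ?thesis .
    qed
    obtain k where k: "M = \<bar>y $ k\<bar>" using maxabs_attained M_def by blast
    have yi: "y $ i = (C *v y) $ i - c $ i" for i using y by (metis vector_add_component vector_uminus_component diff_conv_add_uminus)
    have "M \<le> q * M + maxabs c" using k yi[of k] Cy[of k] maxabs_ge[of c k] by linarith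
    hence M1: "M * (1 - q) \<le> maxabs c" by (simp add: algebra_simps)
    have qM0: "0 \<le> q * M" using Cy[of k] by linarith
    have qMlt: "q * M < cmin"
    proof (cases "q \<le> 0")
      case True
      hence "q * M \<le> 0" using M_def maxabs_nonneg mult_nonpos_nonneg by blast
      thus ?thesis using cmin0 by linarith
    next
      case False
      have "q * (M * (1 - q)) \<le> q * maxabs c" using M1 False by (simp add: mult_left_mono)
      moreover have "q * M / 2 \<le> q * (M * (1 - q))"
      proof -
        have "q * M * (1/2) \<le> q * M * (1 - q)" using qhalf qM0 by (intro mult_left_mono) auto
        thus ?thesis by (simp add: algebra_simps)
      qed
      moreover have "q * maxabs c < cmin / 2" using qlt cmax0 by (simp add: field_simps)
      ultimately show ?thesis by linarith
    qed
    have ypos: "0 < y $ i" for i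
      using yi[of i] Cy[of i] cminle[of i] cneg[rule_format, of i] qMlt by linarith
    have "rank K \<noteq> CARD('n)" using rank_bound[of K] assms(1) by linarith
    then obtain z where z: "z \<noteq> 0" "K *v z = 0" using matrix_nonfull_linear_equations_eq by blast
    obtain iz where iz: "z $ iz \<noteq> 0" using z(1) by (metis vec_eq_iff zero_index)
    define ymin where "ymin = Min (range (\<lambda>i. y $ i))"
    have ymin0: "0 < ymin"
    proof -
      have "ymin \<in> range (\<lambda>i. y $ i)" unfolding ymin_def by (rule Min_in) auto
      thus ?thesis using ypos by auto
    qed
    have yminle: "ymin \<le> y $ i" for i unfolding ymin_def by (rule Min_le) auto
    define eps where "eps = ymin / (maxabs z + 1)"
    have eps0: "0 < eps" using ymin0 maxabs_nonneg[of z] by (simp add: eps_def)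
    define f where "f t = diagm s *v (y + t *\<^sub>R z)" for t :: real
    have wpos: "0 < (y + t *\<^sub>R z) $ i" if t: "t \<in> {0<..<eps}" for t i
    proof -
      have "t * (maxabs z + 1) < ymin" using t maxabs_nonneg[of z] by (simp add: eps_def field_simps)
      moreover have "t * \<bar>z $ i\<bar> \<le> t * (maxabs z + 1)"
        using t maxabs_ge[of z i] by (intro mult_left_mono) auto
      moreover have "- (t * z $ i) \<le> t * \<bar>z $ i\<bar>" using t abs_ge_minus_self[of "t * z $ i"] by (simp add: abs_mult)
      ultimately show ?thesis using yminle[of i] by simp
    qed
    have inj: "inj_on f {0<..<eps}"
    proof (rule inj_onI)
      fix t t' assume "t \<in> {0<..<eps}" "t' \<in> {0<..<eps}" "f t = f t'"
      hence "(f t) $ iz = (f t') $ iz" by simp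
      hence "s $ iz * (y $ iz + t * z $ iz) = s $ iz * (y $ iz + t' * z $ iz)"
        by (simp add: f_def diag_apply)
      moreover have "s $ iz \<noteq> 0" using s by (metis one_neq_zero neg_equal_0_iff_equal)
      ultimately have "t * z $ iz = t' * z $ iz" by simp
      thus "t = t'" using iz by simp
    qed
    have sub: "f ` {0<..<eps} \<subseteq> {x. A *v x - B *v vabs x = b \<and> (\<forall>i. sgn (x $ i) = s $ i)}"
    proof
      fix x assume "x \<in> f ` {0<..<eps}"
      then obtain t where t: "t \<in> {0<..<eps}" and x: "x = f t" by blast
      let ?w = "y + t *\<^sub>R z"
      have w0: "\<forall>i. 0 \<le> ?w $ i" using wpos[OF t] less_imp_le by blast
      have "K *v ?w = b" using sol[OF y] z(2)
        by (simp add: matrix_vector_right_distrib matrix_vector_mult_scaleR)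
      hence e: "A *v x - B *v vabs x = b" using Kx[OF w0] x f_def by simp
      have "sgn (x $ i) = s $ i" for i
      proof -
        have "x $ i = s $ i * ?w $ i" by (simp add: x f_def diag_apply)
        moreover have "sgn (s $ i) = s $ i" using s[rule_format, of i] by auto
        ultimately show ?thesis using wpos[OF t, of i] by (simp add: sgn_mult)
      qed
      thus "x \<in> {x. A *v x - B *v vabs x = b \<and> (\<forall>i. sgn (x $ i) = s $ i)}" using e by simp
    qed
    have "infinite (f ` {0<..<eps})"
      using finite_imageD[OF _ inj] eps0 infinite_Ioo[of 0 eps] by blast
    thus "infinite {x. A *v x - B *v vabs x = b \<and> (\<forall>i. sgn (x $ i) = s $ i)}"
      using sub finite_subset by blast
  qed
qed

end
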